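(* Let $\mu\in(0,1)$ and $\beta(a)=\frac{\mu}{1+a}$. Let $W(\tau,b)=C(\tau)(1-b)^{\mu-1}(1+e^{\tau}b)^{-\mu}$ for $\tau\ge0$, $b\in[0,1)$, with $C(\tau)>0$ such that $\int_0^1W(\tau,b)db=1$, and $\delta(\tau)=\frac{C'(\tau)}{C(\tau)^2}-\frac{\mu}{C(\tau)}$. Then $$\delta(\tau)=-\frac{e^{-\tau}}{1+e^{-\tau}}.$$ *)

theory Defs
  imports "HOL-Analysis.Analysis"
begin

definition W :: "real \<Rightarrow> (real \<Rightarrow> real) \<Rightarrow> real \<Rightarrow> real \<Rightarrow> real" where
  "W \<mu> C \<tau> b = C \<tau> * (1 - b) powr (\<mu> - 1) * (1 + exp \<tau> * b) powr (-\<mu>)"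

end

theory Submission
  imports Defs
begin

definition ff :: "real \<Rightarrow> real \<Rightarrow> real" where
  "ff \<mu> u = u powr (\<mu> - 1) / (1 + u)"

definition GG :: "real \<Rightarrow> real \<Rightarrow> real" where
  "GG \<mu> x = integral {0..x} (ff \<mu>)"

lemma ff_int:
  assumes "0 < \<mu>" "x \<ge> 0"
  shows "ff \<mu> integrable_on {0..x}"
proof -
  have "(\<lambda>u. u powr (\<mu> - 1) - u powr \<mu> / (1 + u)) integrable_on {0..x}"
  proof (rule integrable_diff)
    show "(\<lambda>u. u powr (\<mu> - 1)) integrable_on {0..x}"
      using assms by (intro integrable_on_powr_from_0) auto
    have "continuous_on {0..x} (\<lambda>u. u powr \<mu> / (1 + u))"
      using assms by (intro continuous_intros continuous_on_powr') auto
    then show "(\<lambda>u. u powr \<mu> / (1 + u)) integrable_on {0..x}"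
      by (rule integrable_continuous_interval)
  qed
  moreover have "u powr (\<mu> - 1) - u powr \<mu> / (1 + u) = ff \<mu> u" if "u \<in> {0..x}" for u
  proof (cases "u = 0")
    case False
    then have u: "u > 0" using that by auto
    have "u powr \<mu> = u powr (\<mu> - 1) * u" using u powr_add[of u "\<mu>-1" 1] by simp
    then show ?thesis using u unfolding ff_def by (simp add: field_simps)
  qed (simp add: ff_def)
  ultimately show ?thesis by (rule integrable_eq)
qed

lemma GG_deriv:
  assumes "0 < \<mu>" "x > 0"
  shows "(GG \<mu> has_real_derivative ff \<mu> x) (at x)"
proof -
  have int: "ff \<mu> integrable_on {0..x+1}" using assms by (intro ff_int) auto
  have "isCont (ff \<mu>) x" unfolding ff_def using assms by (intro continuous_intros) auto
  then have c: "continuous (at x within ({0..x+1} - {})) (ff \<mu>)"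
    by (rule continuous_at_imp_continuous_at_within)
  have xin: "x \<in> {0..x+1} - {}" using assms by simp
  have "((\<lambda>u. integral {0..u} (ff \<mu>)) has_vector_derivative ff \<mu> x) (at x within ({0..x+1} - {}))"
    by (rule integral_has_vector_derivative_continuous_at[OF int xin finite.emptyI c])
  then have "((\<lambda>u. integral {0..u} (ff \<mu>)) has_vector_derivative ff \<mu> x) (at x within {0<..<x+1})"
    by (rule has_vector_derivative_within_subset) auto
  moreover have "at x within {0<..<x+1} = at x"
    by (rule at_within_open) (use assms in auto)
  ultimately have "((\<lambda>u. integral {0..u} (ff \<mu>)) has_vector_derivative ff \<mu> x) (at x)"
    by simp
  moreover have "GG \<mu> = (\<lambda>u. integral {0..u} (ff \<mu>))" by (rule ext) (simp add: GG_def)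
  ultimately show ?thesis
    by (simp add: has_real_derivative_iff_has_vector_derivative)
qed

lemma GG_cont:
  assumes "0 < \<mu>" "a \<ge> 0"
  shows "continuous_on {0..a} (GG \<mu>)"
  unfolding GG_def[abs_def] by (rule indefinite_integral_continuous_1[OF ff_int[OF assms]])

lemma alg:
  fixes R Q a t c P :: real
  assumes "R \<noteq> 0" "Q \<noteq> 0" "a \<noteq> 0" "t \<noteq> 0" "c \<noteq> 0"
  shows "1 / (R * a) * (R * P / Q / (c / t) * (a * c / t^2)) = P / (Q * t)"
  using assms by (simp add: field_simps power2_eq_square)

lemma main_eq:
  fixes \<mu> a I :: real
  assumes mu: "0 < \<mu>" and a: "a > 0"
    and hI: "((\<lambda>b. (1 - b) powr (\<mu> - 1) * (1 + a * b) powr (-\<mu>)) has_integral I) {0..1}"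
  shows "I = a powr (-\<mu>) * GG \<mu> a"
proof -
  define g where "g = (\<lambda>b. (1 - b) powr (\<mu> - 1) * (1 + a * b) powr (-\<mu>))"
  define \<phi> where "\<phi> = (\<lambda>b::real. a * (1 - b) / (1 + a * b))"
  define \<phi>' where "\<phi>' = (\<lambda>b::real. - a * (1 + a) / (1 + a * b)^2)"
  define H where "H = (\<lambda>c. a powr (-\<mu>) * (GG \<mu> a - GG \<mu> (\<phi> c)))"
  have pos: "1 + a * b > 0" if "b \<ge> 0" for b using a that by (simp add: add_pos_nonneg)
  have phi_pos: "\<phi> b > 0" if "0 \<le> b" "b < 1" for b
    using pos[OF that(1)] that a unfolding \<phi>_def by simp
  have phi_range: "\<phi> b \<in> {0..a}" if "b \<in> {0..1}" for b
  proof -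
    have p: "1 + a * b > 0" using pos that by auto
    have ab: "a * b \<ge> 0" using a that by simp
    have "a * (1 - b) \<le> a * (1 + a * b)" proof (rule mult_left_mono)
      show "1 - b \<le> 1 + a * b" using ab that by (simp only: atLeastAtMost_iff) linarith
    qed (use a in simp)
    then have "\<phi> b \<le> a" unfolding \<phi>_def using p by (simp add: divide_le_eq)
    moreover have "\<phi> b \<ge> 0" unfolding \<phi>_def using p a that by simp
    ultimately show ?thesis by simp
  qed
  have dphi: "(\<phi> has_real_derivative \<phi>' b) (at b)" if "b \<ge> 0" for b
  proof -
    have p: "1 + a * b \<noteq> 0" using pos[OF that] by simp
    have d1: "((\<lambda>b. a * (1 - b)) has_real_derivative a * (0 - 1)) (at b)"
      by (intro DERIV_cmult DERIV_diff DERIV_const DERIV_ident)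
    have d2: "((\<lambda>b. 1 + a * b) has_real_derivative 0 + a * 1) (at b)"
      by (intro DERIV_cmult DERIV_add DERIV_const DERIV_ident)
    have d3: "((\<lambda>b. a * (1 - b) / (1 + a * b)) has_real_derivative
        ((a * (0 - 1)) * (1 + a * b) - (a * (1 - b)) * (0 + a * 1)) / ((1 + a * b) * (1 + a * b))) (at b)"
      by (rule DERIV_divide[OF d1 d2 p])
    have "((a * (0 - 1)) * (1 + a * b) - (a * (1 - b)) * (0 + a * 1)) / ((1 + a * b) * (1 + a * b))
        = - a * (1 + a) / (1 + a * b)^2"
      by (simp add: power2_eq_square algebra_simps)
    with d3 show ?thesis unfolding \<phi>_def \<phi>'_def by simp
  qed
  have dH: "(H has_real_derivative g b) (at b)" if "0 \<le> b" "b < 1" for b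
  proof -
    have d1: "((\<lambda>b. GG \<mu> (\<phi> b)) has_real_derivative ff \<mu> (\<phi> b) * \<phi>' b) (at b)"
      by (rule DERIV_chain2[OF GG_deriv[OF mu phi_pos[OF that]] dphi[OF that(1)]])
    have d2: "(H has_real_derivative a powr (-\<mu>) * (0 - ff \<mu> (\<phi> b) * \<phi>' b)) (at b)"
      unfolding H_def by (intro DERIV_cmult DERIV_diff DERIV_const d1)
    have p: "1 + a * b > 0" using pos that by auto
    have ob: "1 - b > 0" using that by simp
    define P where "P = (1 - b) powr (\<mu> - 1)"
    define Q where "Q = (1 + a * b) powr (\<mu> - 1)"
    define R where "R = a powr (\<mu> - 1)"
    have PQR: "P > 0" "Q > 0" "R > 0" using p ob a by (auto simp: P_def Q_def R_def)
    have e1: "\<phi> b powr (\<mu> - 1) = R * P / Q"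
      unfolding \<phi>_def P_def Q_def R_def using p ob a
      by (simp add: powr_divide powr_mult)
    have e2: "(1 + a * b) powr (-\<mu>) = 1 / (Q * (1 + a * b))"
      unfolding Q_def using p powr_add[of "1 + a*b" "\<mu> - 1" 1]
      by (simp add: powr_minus divide_inverse)
    have e3: "a powr (-\<mu>) = 1 / (R * a)"
      unfolding R_def using a powr_add[of a "\<mu> - 1" 1]
      by (simp add: powr_minus divide_inverse)
    have e4: "1 + \<phi> b = (1 + a) / (1 + a * b)"
      unfolding \<phi>_def using p by (simp add: field_simps)
    define t where "t = 1 + a * b"
    have tp: "t > 0" using p by (simp add: t_def)
    have "a powr (-\<mu>) * (0 - ff \<mu> (\<phi> b) * \<phi>' b)
        = (1 / (R * a)) * ((R * P / Q) / ((1 + a) / t) * (a * (1 + a) / t^2))"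
      unfolding ff_def e1 e4 e3 \<phi>'_def t_def by simp
    also have "\<dots> = P / (Q * t)"
      proof -
      have a1: "1 + a \<noteq> 0" "R \<noteq> 0" "Q \<noteq> 0" "a \<noteq> 0" "t \<noteq> 0" using a PQR tp by auto
      show ?thesis using alg[OF a1(2,3,4,5,1)] by simp
    qed
    also have "\<dots> = g b"
      unfolding g_def e2 P_def t_def by simp
    finally have "a powr (-\<mu>) * (0 - ff \<mu> (\<phi> b) * \<phi>' b) = g b" .
    with d2 show ?thesis by simp
  qed
  have H0: "H 0 = 0" unfolding H_def \<phi>_def by simp
  have Hint: "(g has_integral H c) {0..c}" if "0 \<le> c" "c < 1" for c
  proof -
    have "(g has_integral H c - H 0) {0..c}"
    proof (rule fundamental_theorem_of_calculus[OF that(1)])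
      fix x assume "x \<in> {0..c}"
      then have "(H has_real_derivative g x) (at x)" using that by (intro dH) auto
      then show "(H has_vector_derivative g x) (at x within {0..c})"
        by (simp add: has_real_derivative_iff_has_vector_derivative has_vector_derivative_at_within)
    qed
    then show ?thesis using H0 by simp
  qed
  have gint: "g integrable_on {0..1}" using hI unfolding g_def by blast
  define F where "F = (\<lambda>c. integral {0..c} g)"
  have Fc: "continuous_on {0..1} F" unfolding F_def by (rule indefinite_integral_continuous_1[OF gint])
  have Hc: "continuous_on {0..1} H"
  proof -
    have pc: "continuous_on {0..1} \<phi>" unfolding \<phi>_def
      by (intro continuous_intros) (force dest: pos)
    have "continuous_on {0..1} (\<lambda>c. GG \<mu> (\<phi> c))"
      by (rule continuous_on_compose2[OF GG_cont[of \<mu> a] pc]) (use mu a phi_range in auto)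
    then show ?thesis unfolding H_def by (intro continuous_intros)
  qed
  have FH: "F c = H c" if "c \<in> {0..<1}" for c
    using Hint[of c] that unfolding F_def by (auto intro: integral_unique)
  have lim1: "(F \<longlongrightarrow> F 1) (at 1 within {0..<1})"
    proof (rule tendsto_within_subset)
    show "(F \<longlongrightarrow> F 1) (at 1 within {0..1})" using Fc by (simp add: continuous_on_def)
  qed auto
  have lim2: "(H \<longlongrightarrow> H 1) (at 1 within {0..<1})"
    proof (rule tendsto_within_subset)
    show "(H \<longlongrightarrow> H 1) (at 1 within {0..1})" using Hc by (simp add: continuous_on_def)
  qed auto
  have "eventually (\<lambda>c. F c = H c) (at 1 within {0..<1})"
    using FH by (auto simp: eventually_at_filter)
  then have lim3: "(H \<longlongrightarrow> F 1) (at 1 within {0..<1})"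
    using lim1 tendsto_cong by blast
  have nt: "\<not> trivial_limit (at (1::real) within {0..<1})"
    by (simp add: trivial_limit_within)
  have "F 1 = H 1" using tendsto_unique[OF nt lim3 lim2] .
  moreover have "F 1 = I" unfolding F_def using hI g_def by (simp add: integral_unique)
  moreover have "H 1 = a powr (-\<mu>) * GG \<mu> a" unfolding H_def \<phi>_def GG_def by simp
  ultimately show ?thesis by simp
qed

lemma alg2:
  fixes P E G \<mu> c :: real
  assumes "P \<noteq> 0" "E \<noteq> 0" "G \<noteq> 0" "c \<noteq> 0"
  shows "(P * E * (\<mu> * 1) * G - P * E * (P / c * E)) / (G * G) / (P * E / G)\<^sup>2 - \<mu> / (P * E / G)
     = - 1 / c"
  using assms by (simp add: field_simps power2_eq_square)

lemma alg3:
  fixes E :: real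
  assumes "E > 0"
  shows "- 1 / (1 + E) = - (1 / E) / (1 + 1 / E)"
proof -
  have "1 + 1 / E = (1 + E) / E" using assms by (simp add: field_simps)
  then show ?thesis using assms by simp
qed

theorem lemma5:
  fixes \<mu> :: real and C :: "real \<Rightarrow> real"
  assumes "0 < \<mu>" and "\<mu> < 1"
    and "\<And>\<tau>. \<tau> \<ge> 0 \<Longrightarrow> C \<tau> > 0"
    and "\<And>\<tau>. \<tau> \<ge> 0 \<Longrightarrow> ((\<lambda>b. W \<mu> C \<tau> b) has_integral 1) {0..1}"
  shows "\<forall>\<tau>\<ge>0. \<exists>D. (C has_real_derivative D) (at \<tau> within {0..}) \<and>
           D / (C \<tau>)\<^sup>2 - \<mu> / C \<tau> = - exp (-\<tau>) / (1 + exp (-\<tau>))"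
proof -
  have Ceq: "C s = exp (\<mu> * s) / GG \<mu> (exp s) \<and> GG \<mu> (exp s) > 0" if s: "s \<ge> 0" for s
  proof -
    have Cp: "C s > 0" using assms(3) s by simp
    have h1: "((\<lambda>b. (1 / C s) * W \<mu> C s b) has_integral (1 / C s) * 1) {0..1}"
      by (rule has_integral_mult_right[OF assms(4)[OF s]])
    have h2: "((\<lambda>b. (1 - b) powr (\<mu> - 1) * (1 + exp s * b) powr (-\<mu>)) has_integral 1 / C s) {0..1}"
      using h1 Cp by (simp add: W_def)
    have "1 / C s = exp s powr (-\<mu>) * GG \<mu> (exp s)"
      by (rule main_eq[OF assms(1) exp_gt_zero h2])
    also have "exp s powr (-\<mu>) = exp (- (\<mu> * s))" by (simp add: powr_def)
    finally have e: "1 / C s = exp (- (\<mu> * s)) * GG \<mu> (exp s)" .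
    then have g: "GG \<mu> (exp s) = exp (\<mu> * s) / C s"
      by (simp add: exp_minus field_simps)
    then have gp: "GG \<mu> (exp s) > 0" using Cp by simp
    moreover have "C s = exp (\<mu> * s) / GG \<mu> (exp s)"
      using g Cp gp by (simp add: field_simps)
    ultimately show ?thesis by simp
  qed
  show ?thesis
  proof (intro allI impI)
    fix \<tau> :: real assume t: "\<tau> \<ge> 0"
    define E where "E = exp \<tau>"
    define G where "G = GG \<mu> (exp \<tau>)"
    define P where "P = exp ((\<mu> - 1) * \<tau>)"
    have Ep: "E > 0" by (simp add: E_def)
    have Gp: "G > 0" using Ceq[OF t] by (simp add: G_def)
    have Pp: "P > 0" by (simp add: P_def)
    have eP: "exp (\<mu> * \<tau>) = P * E"
      unfolding P_def E_def by (simp add: exp_add[symmetric] algebra_simps)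
    have d1: "((\<lambda>s. exp (\<mu> * s)) has_real_derivative exp (\<mu> * \<tau>) * (\<mu> * 1)) (at \<tau>)"
      by (rule DERIV_chain2[OF DERIV_exp DERIV_cmult[OF DERIV_ident]])
    have d2: "((\<lambda>s. GG \<mu> (exp s)) has_real_derivative ff \<mu> (exp \<tau>) * exp \<tau>) (at \<tau>)"
      by (rule DERIV_chain2[OF GG_deriv[OF assms(1) exp_gt_zero] DERIV_exp])
    define D where "D = (exp (\<mu> * \<tau>) * (\<mu> * 1) * G - exp (\<mu> * \<tau>) * (ff \<mu> (exp \<tau>) * exp \<tau>)) / (G * G)"
    have d3: "((\<lambda>s. exp (\<mu> * s) / GG \<mu> (exp s)) has_real_derivative D) (at \<tau>)"
      unfolding D_def G_def by (rule DERIV_divide[OF d1 d2]) (use Gp G_def in simp)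
    have d4: "(C has_real_derivative D) (at \<tau> within {0..})"
    proof (rule has_field_derivative_transform_within[OF has_field_derivative_at_within[OF d3] zero_less_one])
      show "\<tau> \<in> {0..}" using t by simp
      fix x :: real assume "x \<in> {0..}"
      then show "exp (\<mu> * x) / GG \<mu> (exp x) = C x" using Ceq[of x] by simp
    qed
    have ffE: "ff \<mu> E = P / (1 + E)"
      unfolding ff_def P_def E_def by (simp add: powr_def)
    have Ct: "C \<tau> = P * E / G" using Ceq[OF t] eP by (simp add: G_def)
    have "D / (C \<tau>)\<^sup>2 - \<mu> / C \<tau> = - 1 / (1 + E)"
      unfolding D_def Ct eP E_def[symmetric] ffE
      by (rule alg2) (use Pp Ep Gp in auto)
    also have "\<dots> = - (1 / E) / (1 + 1 / E)" by (rule alg3[OF Ep])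
    also have "\<dots> = - exp (-\<tau>) / (1 + exp (-\<tau>))" by (simp add: E_def exp_minus inverse_eq_divide)
    finally show "\<exists>D. (C has_real_derivative D) (at \<tau> within {0..}) \<and>
           D / (C \<tau>)\<^sup>2 - \<mu> / C \<tau> = - exp (-\<tau>) / (1 + exp (-\<tau>))"
      using d4 by blast
  qed
qed

end
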